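(* Let $\Gamma$ be a countable group, $S$ a countable free $\Gamma$-set, and $\Gamma\curvearrowright(X,\mu)$ a standard $\Gamma$-space. Then the augmented chain complex $\tilde\varepsilon_S\colon L^\infty_{fs}(X\times S^{*+1};\mathbb{Z})\to L^\infty(X;\mathbb{Z})$ is a $\mathbb{Z}\Gamma$-resolution of $L^\infty(X;\mathbb{Z})$ (i.e. it is exact).
   Context: A standard $\Gamma$-space is a measure preserving action on a standard Borel probability space; $L^\infty(X;\mathbb{Z})$ has $\Gamma$-action $(\gamma f)(x)=f(\gamma^{-1}x)$. $L^\infty_{fs}(X\times S^{n+1};\mathbb{Z})$ is the $\mathbb{Z}\Gamma$-module of (classes of) essentially bounded measurable $f\colon X\times S^{n+1}\to\mathbb{Z}$ (w.r.t. $\mu\otimes$counting measure) supported in $X\times F$ for some finite $F\subset S^{n+1}$, with diagonal $\Gamma$-action, boundary $(\partial_nf)(x,s_0,\dots,s_{n-1})=\sum_{j=0}^n(-1)^j\sum_{t\in S}f(x,s_0,\dots,s_{j-1},t,s_j,\dots,s_{n-1})$ and augmentation $\tilde\varepsilon_Sf=\sum_{s\in S}f(\cdot,s)$. *)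

theory Defs
  imports "HOL-Probability.Probability" "HOL-Algebra.Group_Action"
begin

definition standard_borel :: "'x measure \<Rightarrow> bool" where
  "standard_borel M \<longleftrightarrow>
     (\<exists>d. Metric_space (space M) d \<and> Metric_space.mcomplete (space M) d \<and>
          separable_space (Metric_space.mtopology (space M) d) \<and>
          sets M = sigma_sets (space M) {U. openin (Metric_space.mtopology (space M) d) U})"

definition measure_preserving_map :: "'x measure \<Rightarrow> ('x \<Rightarrow> 'x) \<Rightarrow> bool" where
  "measure_preserving_map M T \<longleftrightarrow> T \<in> M \<rightarrow>\<^sub>M M \<and> distr M M T = M"

definition standard_G_space :: "('g, 'b) monoid_scheme \<Rightarrow> 'x measure \<Rightarrow> ('g \<Rightarrow> 'x \<Rightarrow> 'x) \<Rightarrow> bool" where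
  "standard_G_space G M a \<longleftrightarrow>
     prob_space M \<and> standard_borel M \<and> group_action G (space M) a \<and>
     (\<forall>g\<in>carrier G. measure_preserving_map M (a g))"

definition free_G_set :: "('g, 'b) monoid_scheme \<Rightarrow> 's set \<Rightarrow> ('g \<Rightarrow> 's \<Rightarrow> 's) \<Rightarrow> bool" where
  "free_G_set G S b \<longleftrightarrow> group_action G S b \<and>
     (\<forall>g\<in>carrier G. \<forall>s\<in>S. b g s = s \<longrightarrow> g = \<one>\<^bsub>G\<^esub>)"

text \<open>Tuples in S^(n+1), represented as lists of length n+1.\<close>
definition tuples :: "'s set \<Rightarrow> nat \<Rightarrow> 's list set" where
  "tuples S n = {s. length s = Suc n \<and> set s \<subseteq> S}"

text \<open>Representatives of elements of L^infty(X;Z): essentially bounded measurable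
  integer valued functions (classes are taken modulo a.e. equality).\<close>
definition Linf :: "'x measure \<Rightarrow> ('x \<Rightarrow> int) set" where
  "Linf M = {h. h \<in> M \<rightarrow>\<^sub>M count_space UNIV \<and> (\<exists>C. AE x in M. \<bar>h x\<bar> \<le> C)}"

text \<open>Representatives of elements of L^infty_fs(X x S^(n+1);Z): functions on X x S^(n+1)
  (extended by 0 outside S^(n+1)), measurable, essentially bounded w.r.t. mu x counting
  measure, and supported in X x F for a finite F. Since S^(n+1) is countable, measurability
  and essential boundedness w.r.t. the product with counting measure are checked slice-wise.
  Every class has such a representative; classes are taken modulo equality
  (mu x counting)-a.e., i.e. a.e. in x for every tuple.\<close>
definition Lfs :: "'x measure \<Rightarrow> 's set \<Rightarrow> nat \<Rightarrow> ('x \<Rightarrow> 's list \<Rightarrow> int) set" where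
  "Lfs M S n = {f.
     (\<forall>s. (\<lambda>x. f x s) \<in> M \<rightarrow>\<^sub>M count_space UNIV) \<and>
     (\<exists>C. \<forall>s\<in>tuples S n. AE x in M. \<bar>f x s\<bar> \<le> C) \<and>
     (\<exists>F. finite F \<and> F \<subseteq> tuples S n \<and> (\<forall>x s. s \<notin> F \<longrightarrow> f x s = 0))}"

definition fsum :: "('s \<Rightarrow> int) \<Rightarrow> 's set \<Rightarrow> int" where
  "fsum u A = sum u {t\<in>A. u t \<noteq> 0}"

definition ins_at :: "nat \<Rightarrow> 's \<Rightarrow> 's list \<Rightarrow> 's list" where
  "ins_at j t s = take j s @ t # drop j s"

definition bd :: "'s set \<Rightarrow> nat \<Rightarrow> ('x \<Rightarrow> 's list \<Rightarrow> int) \<Rightarrow> ('x \<Rightarrow> 's list \<Rightarrow> int)" where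
  "bd S n f = (\<lambda>x s. \<Sum>j\<le>n. (-1)^j * fsum (\<lambda>t. f x (ins_at j t s)) S)"

definition aug :: "'s set \<Rightarrow> ('x \<Rightarrow> 's list \<Rightarrow> int) \<Rightarrow> ('x \<Rightarrow> int)" where
  "aug S f = (\<lambda>x. fsum (\<lambda>s. f x [s]) S)"

definition gact_fs :: "('g, 'b) monoid_scheme \<Rightarrow> ('g \<Rightarrow> 'x \<Rightarrow> 'x) \<Rightarrow> ('g \<Rightarrow> 's \<Rightarrow> 's) \<Rightarrow> 'g
    \<Rightarrow> ('x \<Rightarrow> 's list \<Rightarrow> int) \<Rightarrow> ('x \<Rightarrow> 's list \<Rightarrow> int)" where
  "gact_fs G a b g f = (\<lambda>x s. f (a (inv\<^bsub>G\<^esub> g) x) (map (b (inv\<^bsub>G\<^esub> g)) s))"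

definition gact :: "('g, 'b) monoid_scheme \<Rightarrow> ('g \<Rightarrow> 'x \<Rightarrow> 'x) \<Rightarrow> 'g
    \<Rightarrow> ('x \<Rightarrow> int) \<Rightarrow> ('x \<Rightarrow> int)" where
  "gact G a g h = (\<lambda>x. h (a (inv\<^bsub>G\<^esub> g) x))"

end

theory Submission
  imports Defs
begin

definition DW :: "'s set \<Rightarrow> nat \<Rightarrow> ('s list \<Rightarrow> int) \<Rightarrow> 's list \<Rightarrow> int" where
  "DW W n \<phi> s = (\<Sum>j\<le>n. (-1)^j * (\<Sum>t\<in>W. \<phi> (ins_at j t s)))"

definition Kc :: "'s \<Rightarrow> ('s list \<Rightarrow> int) \<Rightarrow> 's list \<Rightarrow> int" where
  "Kc s0 \<phi> u = (case u of [] \<Rightarrow> 0 | v # w \<Rightarrow> if v = s0 then \<phi> w else 0)"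

lemma ins_at_len[simp]: "length (ins_at j t s) = Suc (length s)"
  by (simp add: ins_at_def)

lemma ins_at_set[simp]: "set (ins_at j t s) = insert t (set s)"
  unfolding ins_at_def by (metis Un_insert_right append_take_drop_id list.simps(15) set_append)

lemma ins_at_0[simp]: "ins_at 0 t s = t # s"
  by (simp add: ins_at_def)

lemma ins_at_Suc_Cons[simp]: "ins_at (Suc j) t (v # w) = v # ins_at j t w"
  by (simp add: ins_at_def)

lemma ins_at_map: "map \<beta> (ins_at j t s) = ins_at j (\<beta> t) (map \<beta> s)"
  by (simp add: ins_at_def take_map drop_map)

lemma ins_at_comm:
  "j \<le> i \<Longrightarrow> i \<le> length s \<Longrightarrow> ins_at j u (ins_at i t s) = ins_at (Suc i) t (ins_at j u s)"
proof (induction s arbitrary: i j)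
  case Nil
  then show ?case by (simp add: ins_at_def)
next
  case (Cons v w)
  show ?case
  proof (cases j)
    case 0
    then show ?thesis by simp
  next
    case (Suc j')
    then obtain i' where i: "i = Suc i'" using Cons.prems by (cases i) auto
    show ?thesis using Cons.IH[of j' i'] Cons.prems Suc i by simp
  qed
qed

lemma fsum_eq_sum:
  assumes "finite W" "W \<subseteq> S" "\<And>t. t \<in> S \<Longrightarrow> h t \<noteq> 0 \<Longrightarrow> t \<in> W"
  shows "fsum h S = sum h W"
  unfolding fsum_def
  by (rule sum.mono_neutral_left) (use assms in auto)

lemma fsum_ins_at:
  assumes "finite W" "W \<subseteq> S" "\<And>u. \<phi> u \<noteq> 0 \<Longrightarrow> set u \<subseteq> W"
  shows "fsum (\<lambda>t. \<phi> (ins_at j t s)) S = (\<Sum>t\<in>W. \<phi> (ins_at j t s))"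
proof (rule fsum_eq_sum)
  fix t assume "t \<in> S" "\<phi> (ins_at j t s) \<noteq> 0"
  then show "t \<in> W" using assms(3)[of "ins_at j t s"] by simp
qed (use assms in auto)

lemma bd_DW:
  assumes "finite W" "W \<subseteq> S" "\<And>u. f x u \<noteq> 0 \<Longrightarrow> set u \<subseteq> W"
  shows "bd S n f x s = DW W n (f x) s"
  unfolding bd_def DW_def using fsum_ins_at[OF assms] by simp

lemma aug_DW:
  assumes "finite W" "W \<subseteq> S" "\<And>u. f x u \<noteq> 0 \<Longrightarrow> set u \<subseteq> W"
  shows "aug S f x = DW W 0 (f x) []"
  unfolding aug_def DW_def using fsum_ins_at[OF assms, where j=0 and s="[]"] by simp

lemma fsum_reindex:
  assumes "bij_betw \<beta> S S"
  shows "fsum (\<lambda>t. h (\<beta> t)) S = fsum h S"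
proof -
  have "bij_betw \<beta> {t\<in>S. h (\<beta> t) \<noteq> 0} {t\<in>S. h t \<noteq> 0}"
    using assms unfolding bij_betw_def inj_on_def by auto
  then show ?thesis unfolding fsum_def using sum.reindex_bij_betw by fastforce
qed

lemma DW_Kc:
  assumes "s0 \<in> W" "finite W"
  shows "DW W (Suc m) (Kc s0 \<phi>) (v # w) = \<phi> (v # w) - (if v = s0 then DW W m \<phi> w else 0)"
proof -
  have 0: "(\<Sum>t\<in>W. Kc s0 \<phi> (t # v # w)) = \<phi> (v # w)"
    using assms by (simp add: Kc_def sum.delta)
  have 1: "(\<Sum>t\<in>W. Kc s0 \<phi> (v # ins_at j t w)) = (if v = s0 then (\<Sum>t\<in>W. \<phi> (ins_at j t w)) else 0)" for j
    by (simp add: Kc_def)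
  have "DW W (Suc m) (Kc s0 \<phi>) (v # w) = (\<Sum>t\<in>W. Kc s0 \<phi> (t # v # w))
     + (\<Sum>j\<le>m. (-1)^(Suc j) * (\<Sum>t\<in>W. Kc s0 \<phi> (ins_at (Suc j) t (v # w))))"
    unfolding DW_def by (subst sum.atMost_Suc_shift) simp
  also have "\<dots> = \<phi> (v # w) - (\<Sum>j\<le>m. (-1)^j * (\<Sum>t\<in>W. Kc s0 \<phi> (v # ins_at j t w)))"
    by (simp add: 0 sum_negf)
  also have "\<dots> = \<phi> (v # w) - (if v = s0 then DW W m \<phi> w else 0)"
    unfolding DW_def 1 by simp
  finally show ?thesis .
qed

lemma DW_DW:
  assumes "finite W" "length s = m"
  shows "DW W m (DW W (Suc m) \<phi>) s = 0"
proof -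
  define A where "A i j = (\<Sum>t\<in>W. \<Sum>u\<in>W. \<phi> (ins_at j u (ins_at i t s)))" for i j
  define c where "c p = (-1::int)^(fst p + snd p) * A (fst p) (snd p)" for p
  have e1: "DW W m (DW W (Suc m) \<phi>) s = (\<Sum>i\<le>m. \<Sum>j\<le>Suc m. (-1)^(i+j) * A i j)"
    unfolding DW_def A_def sum_distrib_left
    by (rule sum.cong[OF refl], subst sum.swap, simp add: power_add mult_ac)
  also have "\<dots> = sum c ({..m} \<times> {..Suc m})"
    unfolding c_def sum.cartesian_product by (rule sum.cong) auto
  also have "{..m} \<times> {..Suc m} = {(i,j). i \<le> m \<and> j \<le> i} \<union> {(i,j). i < j \<and> j \<le> Suc m}"
    by auto
  also have "sum c \<dots> = sum c {(i,j). i \<le> m \<and> j \<le> i} + sum c {(i,j). i < j \<and> j \<le> Suc m}"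
  proof (rule sum.union_disjoint)
    show "finite {(i, j). i \<le> m \<and> j \<le> i}"
      by (rule finite_subset[of _ "{..m} \<times> {..m}"]) auto
    show "finite {(i, j). i < j \<and> j \<le> Suc m}"
      by (rule finite_subset[of _ "{..Suc m} \<times> {..Suc m}"]) auto
  qed auto
  also have "sum c {(i,j). i < j \<and> j \<le> Suc m} = sum (\<lambda>p. c (snd p, Suc (fst p))) {(i,j). i \<le> m \<and> j \<le> i}"
    by (rule sum.reindex_bij_witness[of _ "\<lambda>p. (snd p, Suc (fst p))" "\<lambda>p. (snd p - 1, fst p)"]) auto
  also have "\<dots> = sum (\<lambda>p. - c p) {(i,j). i \<le> m \<and> j \<le> i}"
  proof (rule sum.cong[OF refl])
    fix p assume "p \<in> {(i,j). i \<le> m \<and> j \<le> i}"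
    then obtain i j where p: "p = (i,j)" "i \<le> m" "j \<le> i" by auto
    have "A i j = A j (Suc i)"
    proof -
      have "A i j = (\<Sum>t\<in>W. \<Sum>u\<in>W. \<phi> (ins_at (Suc i) t (ins_at j u s)))"
        unfolding A_def using p assms(2) by (simp add: ins_at_comm)
      also have "\<dots> = A j (Suc i)" unfolding A_def by (rule sum.swap)
      finally show ?thesis .
    qed
    then show "c (snd p, Suc (fst p)) = - c p"
      unfolding c_def p by (simp add: add.commute)
  qed
  finally show ?thesis by (simp add: sum_negf)
qed

lemma meas_sum:
  assumes "finite W" "\<And>t. t \<in> W \<Longrightarrow> (\<lambda>x. g x t :: int) \<in> M \<rightarrow>\<^sub>M count_space UNIV"
  shows "(\<lambda>x. \<Sum>t\<in>W. g x t) \<in> M \<rightarrow>\<^sub>M count_space UNIV"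
  using assms
proof (induction W rule: finite_induct)
  case empty
  then show ?case by simp
next
  case (insert t W)
  have "(\<lambda>x. g x t) \<in> M \<rightarrow>\<^sub>M count_space UNIV" using insert by simp
  moreover have "(\<lambda>x. \<Sum>t\<in>W. g x t) \<in> M \<rightarrow>\<^sub>M count_space UNIV" using insert by simp
  ultimately have "(\<lambda>x. g x t + (\<Sum>t\<in>W. g x t)) \<in> M \<rightarrow>\<^sub>M count_space UNIV" by measurable
  then show ?case using insert by simp
qed

lemma DW_meas:
  assumes "finite W" "\<And>u. (\<lambda>x. f x u :: int) \<in> M \<rightarrow>\<^sub>M count_space UNIV"
  shows "(\<lambda>x. DW W n (f x) s) \<in> M \<rightarrow>\<^sub>M count_space UNIV"
  unfolding DW_def
proof (rule meas_sum)
  fix j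
  have "(\<lambda>x. \<Sum>t\<in>W. f x (ins_at j t s)) \<in> M \<rightarrow>\<^sub>M count_space UNIV"
    by (rule meas_sum) (use assms in auto)
  then show "(\<lambda>x. (-1)^j * (\<Sum>t\<in>W. f x (ins_at j t s))) \<in> M \<rightarrow>\<^sub>M count_space UNIV"
    by measurable
qed simp

lemma Kc_meas:
  assumes "\<And>u. (\<lambda>x. f x u :: int) \<in> M \<rightarrow>\<^sub>M count_space UNIV"
  shows "(\<lambda>x. Kc s0 (f x) u) \<in> M \<rightarrow>\<^sub>M count_space UNIV"
  using assms by (cases u) (auto simp: Kc_def)

lemma DW_bound:
  assumes "\<And>u. \<bar>\<phi> u\<bar> \<le> C"
  shows "\<bar>DW W n \<phi> s\<bar> \<le> of_nat (Suc n) * (of_nat (card W) * C)"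
proof -
  have 1: "\<bar>(\<Sum>t\<in>W. \<phi> (ins_at j t s))\<bar> \<le> of_nat (card W) * C" for j
  proof -
    have "\<bar>(\<Sum>t\<in>W. \<phi> (ins_at j t s))\<bar> \<le> (\<Sum>t\<in>W. \<bar>\<phi> (ins_at j t s)\<bar>)" by (rule sum_abs)
    also have "\<dots> \<le> of_nat (card W) * C" by (rule sum_bounded_above) (use assms in auto)
    finally show ?thesis .
  qed
  have "\<bar>DW W n \<phi> s\<bar> \<le> (\<Sum>j\<le>n. \<bar>(-1)^j * (\<Sum>t\<in>W. \<phi> (ins_at j t s))\<bar>)"
    unfolding DW_def by (rule sum_abs)
  also have "\<dots> \<le> of_nat (card {..n}) * (of_nat (card W) * C)"
    by (rule sum_bounded_above) (simp add: abs_mult 1)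
  finally show ?thesis by simp
qed

lemma DW_supp:
  assumes "\<And>u. \<phi> u \<noteq> 0 \<Longrightarrow> u \<in> tuples W (Suc k)" "DW W (Suc k) \<phi> s \<noteq> 0"
  shows "s \<in> tuples W k"
proof -
  obtain j t where "\<phi> (ins_at j t s) \<noteq> 0"
    using assms(2) unfolding DW_def by (metis (no_types, lifting) mult_zero_right sum.neutral)
  then have "ins_at j t s \<in> tuples W (Suc k)" using assms(1) by blast
  then show ?thesis unfolding tuples_def by simp
qed

lemma Kc_supp:
  assumes "\<And>u. \<phi> u \<noteq> 0 \<Longrightarrow> u \<in> tuples W k" "s0 \<in> W" "Kc s0 \<phi> u \<noteq> 0"
  shows "u \<in> tuples W (Suc k)"
  using assms unfolding tuples_def Kc_def by (cases u) (auto split: if_splits)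

lemma tuples_mono: "W \<subseteq> W' \<Longrightarrow> tuples W n \<subseteq> tuples W' n"
  unfolding tuples_def by auto

lemma finite_tuples: "finite W \<Longrightarrow> finite (tuples W n)"
  unfolding tuples_def using finite_lists_length_eq[of W "Suc n"] by (simp add: conj_commute)

lemma countable_tuples: "countable S \<Longrightarrow> countable (tuples S n)"
  by (rule countable_subset[OF _ countable_lists[of S]]) (auto simp: tuples_def)

lemma Lfs_intro:
  assumes "\<And>u. (\<lambda>x. f x u) \<in> M \<rightarrow>\<^sub>M count_space UNIV"
    "AE x in M. \<forall>u. \<bar>f x u\<bar> \<le> C" "finite W" "W \<subseteq> S"
    "\<And>x u. f x u \<noteq> 0 \<Longrightarrow> u \<in> tuples W n"
  shows "f \<in> Lfs M S n"
proof -
  have b: "\<forall>s\<in>tuples S n. AE x in M. \<bar>f x s\<bar> \<le> C"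
    using assms(2) by (auto elim: eventually_mono)
  have "finite (tuples W n)" using assms(3) by (rule finite_tuples)
  moreover have "tuples W n \<subseteq> tuples S n" using assms(4) by (rule tuples_mono)
  moreover have "\<forall>x s. s \<notin> tuples W n \<longrightarrow> f x s = 0" using assms(5) by blast
  ultimately show ?thesis unfolding Lfs_def using assms(1) b by blast
qed

lemma Lfs_elim:
  assumes "f \<in> Lfs M S n" "countable S"
  obtains W C where "finite W" "W \<subseteq> S" "\<And>x u. f x u \<noteq> 0 \<Longrightarrow> u \<in> tuples W n"
    "AE x in M. \<forall>u. \<bar>f x u\<bar> \<le> C" "0 \<le> C" "\<And>u. (\<lambda>x. f x u) \<in> M \<rightarrow>\<^sub>M count_space UNIV"
proof -
  from assms(1) obtain C F where meas: "\<And>u. (\<lambda>x. f x u) \<in> M \<rightarrow>\<^sub>M count_space UNIV"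
    and C: "\<forall>s\<in>tuples S n. AE x in M. \<bar>f x s\<bar> \<le> C"
    and F: "finite F" "F \<subseteq> tuples S n" "\<And>x s. s \<notin> F \<Longrightarrow> f x s = 0"
    unfolding Lfs_def by blast
  define W where "W = \<Union>(set ` F)"
  have W: "finite W" "W \<subseteq> S" using F(1,2) unfolding W_def tuples_def by auto
  have supp: "u \<in> tuples W n" if "f x u \<noteq> 0" for x u
  proof -
    have "u \<in> F" using F(3) that by blast
    then show ?thesis using F(2) unfolding W_def tuples_def by auto
  qed
  have "AE x in M. \<forall>s\<in>tuples S n. \<bar>f x s\<bar> \<le> C"
    using C by (subst AE_ball_countable[OF countable_tuples[OF assms(2)]])
  then have "AE x in M. \<forall>u. \<bar>f x u\<bar> \<le> max C 0"
  proof (rule eventually_mono)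
    fix x assume *: "\<forall>s\<in>tuples S n. \<bar>f x s\<bar> \<le> C"
    show "\<forall>u. \<bar>f x u\<bar> \<le> max C 0"
    proof
      fix u show "\<bar>f x u\<bar> \<le> max C 0"
      proof (cases "f x u = 0")
        case False
        then have "u \<in> tuples S n" using supp tuples_mono[OF W(2)] by blast
        then show ?thesis using * by force
      qed simp
    qed
  qed
  then show ?thesis using that W supp meas by (meson max.cobounded2)
qed

lemma DW_cong:
  assumes "\<And>j t. j \<le> n \<Longrightarrow> t \<in> W \<Longrightarrow> \<phi> (ins_at j t s) = \<psi> (ins_at j t s)"
  shows "DW W n \<phi> s = DW W n \<psi> s"
  unfolding DW_def using assms by (intro sum.cong refl) auto

lemma setW_of_tuples:
  assumes "\<And>x u. f x u \<noteq> 0 \<Longrightarrow> u \<in> tuples W n"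
  shows "\<And>x u. f x u \<noteq> 0 \<Longrightarrow> set u \<subseteq> W"
  using assms unfolding tuples_def by blast

lemma part1:
  assumes "countable S" "f \<in> Lfs M S (Suc n)"
  shows "bd S (Suc n) f \<in> Lfs M S n"
proof -
  obtain W C where W: "finite W" "W \<subseteq> S" and supp: "\<And>x u. f x u \<noteq> 0 \<Longrightarrow> u \<in> tuples W (Suc n)"
    and C: "AE x in M. \<forall>u. \<bar>f x u\<bar> \<le> C" and C0: "0 \<le> C"
    and meas: "\<And>u. (\<lambda>x. f x u) \<in> M \<rightarrow>\<^sub>M count_space UNIV"
    using Lfs_elim[OF assms(2,1)] by blast
  have setW: "\<And>x u. f x u \<noteq> 0 \<Longrightarrow> set u \<subseteq> W" using supp unfolding tuples_def by blast
  have eq: "bd S (Suc n) f x s = DW W (Suc n) (f x) s" for x s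
    by (rule bd_DW[OF W setW[of x]])
  show ?thesis
  proof (rule Lfs_intro[where W=W and C="of_nat (Suc (Suc n)) * (of_nat (card W) * C)"])
    show "(\<lambda>x. bd S (Suc n) f x u) \<in> M \<rightarrow>\<^sub>M count_space UNIV" for u
      unfolding eq by (rule DW_meas[OF W(1) meas])
    show "AE x in M. \<forall>u. \<bar>bd S (Suc n) f x u\<bar> \<le> of_nat (Suc (Suc n)) * (of_nat (card W) * C)"
      using C
    proof (rule eventually_mono)
      fix x assume a: "\<forall>u. \<bar>f x u\<bar> \<le> C"
      show "\<forall>u. \<bar>bd S (Suc n) f x u\<bar> \<le> of_nat (Suc (Suc n)) * (of_nat (card W) * C)"
      proof
        fix u show "\<bar>bd S (Suc n) f x u\<bar> \<le> of_nat (Suc (Suc n)) * (of_nat (card W) * C)"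
          unfolding eq by (rule DW_bound) (use a in blast)
      qed
    qed
    show "u \<in> tuples W n" if "bd S (Suc n) f x u \<noteq> 0" for x u
    proof -
      have d: "DW W (Suc n) (f x) u \<noteq> 0" using that by (simp add: eq)
      have "\<And>v. f x v \<noteq> 0 \<Longrightarrow> v \<in> tuples W (Suc n)" by (rule supp)
      then show ?thesis using d by (rule DW_supp)
    qed
  qed (use W in auto)
qed

lemma part2:
  assumes "countable S" "f \<in> Lfs M S 0"
  shows "aug S f \<in> Linf M"
proof -
  obtain W C where W: "finite W" "W \<subseteq> S" and supp: "\<And>x u. f x u \<noteq> 0 \<Longrightarrow> u \<in> tuples W 0"
    and C: "AE x in M. \<forall>u. \<bar>f x u\<bar> \<le> C" and C0: "0 \<le> C"
    and meas: "\<And>u. (\<lambda>x. f x u) \<in> M \<rightarrow>\<^sub>M count_space UNIV"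
    using Lfs_elim[OF assms(2,1)] by blast
  have setW: "\<And>x u. f x u \<noteq> 0 \<Longrightarrow> set u \<subseteq> W" using supp unfolding tuples_def by blast
  have eq: "aug S f x = DW W 0 (f x) []" for x
    by (rule aug_DW[OF W setW[of x]])
  have m: "(\<lambda>x. DW W 0 (f x) []) \<in> M \<rightarrow>\<^sub>M count_space UNIV"
    by (rule DW_meas[OF W(1) meas])
  have e: "aug S f = (\<lambda>x. DW W 0 (f x) [])" using eq by (intro ext)
  have b: "AE x in M. \<bar>aug S f x\<bar> \<le> of_nat (Suc 0) * (of_nat (card W) * C)"
    using C
  proof (rule eventually_mono)
    fix x assume a: "\<forall>u. \<bar>f x u\<bar> \<le> C"
    show "\<bar>aug S f x\<bar> \<le> of_nat (Suc 0) * (of_nat (card W) * C)"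
      unfolding eq by (rule DW_bound) (use a in blast)
  qed
  show ?thesis unfolding Linf_def using m b unfolding e[symmetric] by blast
qed

lemma bij_act:
  assumes "group G" "group_action G S b" "g \<in> carrier G"
  shows "bij_betw (b (inv\<^bsub>G\<^esub> g)) S S"
proof -
  have "inv\<^bsub>G\<^esub> g \<in> carrier G" using assms by (simp add: group.inv_closed)
  then show ?thesis using group_action.inj_prop[OF assms(2)] group_action.surj_prop[OF assms(2)]
    unfolding bij_betw_def by blast
qed

lemma part3:
  assumes "group G" "group_action G S b" "g \<in> carrier G"
  shows "bd S n (gact_fs G a b g f) x s = gact_fs G a b g (bd S n f) x s"
proof -
  define \<beta> where "\<beta> = b (inv\<^bsub>G\<^esub> g)"
  have bij: "bij_betw \<beta> S S" unfolding \<beta>_def by (rule bij_act[OF assms])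
  have r: "fsum (\<lambda>t. f y (ins_at j (\<beta> t) (map \<beta> s))) S = fsum (\<lambda>t. f y (ins_at j t (map \<beta> s))) S" for y j
    using fsum_reindex[OF bij, where h="\<lambda>t. f y (ins_at j t (map \<beta> s))"] by simp
  show ?thesis unfolding gact_fs_def bd_def \<beta>_def[symmetric] ins_at_map r ..
qed

lemma part4:
  assumes "group G" "group_action G S b" "g \<in> carrier G"
  shows "aug S (gact_fs G a b g f) x = gact G a g (aug S f) x"
proof -
  define \<beta> where "\<beta> = b (inv\<^bsub>G\<^esub> g)"
  have bij: "bij_betw \<beta> S S" unfolding \<beta>_def by (rule bij_act[OF assms])
  have r: "fsum (\<lambda>t. f y [\<beta> t]) S = fsum (\<lambda>t. f y [t]) S" for y
    using fsum_reindex[OF bij, where h="\<lambda>t. f y [t]"] by simp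
  show ?thesis unfolding gact_fs_def gact_def aug_def \<beta>_def[symmetric] by (simp add: r)
qed

lemma part5:
  assumes "s0 \<in> S" "h \<in> Linf M"
  shows "\<exists>f\<in>Lfs M S 0. AE x in M. aug S f x = h x"
proof -
  obtain C where hm: "h \<in> M \<rightarrow>\<^sub>M count_space UNIV" and C: "AE x in M. \<bar>h x\<bar> \<le> C"
    using assms(2) unfolding Linf_def by blast
  define f where "f = (\<lambda>x u. if u = [s0] then h x else (0::int))"
  have supp: "\<And>x u. f x u \<noteq> 0 \<Longrightarrow> u \<in> tuples {s0} 0"
    unfolding f_def tuples_def by (auto split: if_splits)
  have "f \<in> Lfs M S 0"
  proof (rule Lfs_intro[where W="{s0}" and C="max C 0"])
    show "(\<lambda>x. f x u) \<in> M \<rightarrow>\<^sub>M count_space UNIV" for u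
      unfolding f_def using hm by (cases "u = [s0]") auto
    show "AE x in M. \<forall>u. \<bar>f x u\<bar> \<le> max C 0"
      using C by (rule eventually_mono) (auto simp: f_def)
  qed (use assms(1) supp in auto)
  moreover have "aug S f x = h x" for x
  proof -
    have setW: "\<And>x u. f x u \<noteq> 0 \<Longrightarrow> set u \<subseteq> {s0}" using supp unfolding tuples_def by blast
    have "aug S f x = DW {s0} 0 (f x) []"
      by (rule aug_DW[OF _ _ setW[of x]]) (use assms(1) in auto)
    then show ?thesis by (simp add: DW_def f_def)
  qed
  ultimately show ?thesis by auto
qed

lemma Kc_bound:
  assumes "\<forall>u. \<bar>\<phi> u\<bar> \<le> C" "0 \<le> C"
  shows "\<bar>Kc s0 \<phi> u\<bar> \<le> C"
  using assms by (cases u) (auto simp: Kc_def)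

lemma Kc_part:
  assumes "countable S" "s0 \<in> S" "f \<in> Lfs M S m"
  obtains W where "finite W" "W \<subseteq> S" "\<And>x u. f x u \<noteq> 0 \<Longrightarrow> set u \<subseteq> W"
    "(\<lambda>x. Kc s0 (f x)) \<in> Lfs M S (Suc m)"
    "\<And>x v w. bd S (Suc m) (\<lambda>x. Kc s0 (f x)) x (v # w)
        = f x (v # w) - (if v = s0 then DW W m (f x) w else 0)"
proof -
  obtain W0 C where W0: "finite W0" "W0 \<subseteq> S" and supp: "\<And>x u. f x u \<noteq> 0 \<Longrightarrow> u \<in> tuples W0 m"
    and C: "AE x in M. \<forall>u. \<bar>f x u\<bar> \<le> C" and C0: "0 \<le> C"
    and meas: "\<And>u. (\<lambda>x. f x u) \<in> M \<rightarrow>\<^sub>M count_space UNIV"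
    using Lfs_elim[OF assms(3,1)] by blast
  define W where "W = insert s0 W0"
  have W: "finite W" "W \<subseteq> S" "s0 \<in> W" using W0 assms(2) unfolding W_def by auto
  have tm: "tuples W0 m \<subseteq> tuples W m" by (rule tuples_mono) (auto simp: W_def)
  have supp': "f x u \<noteq> 0 \<Longrightarrow> u \<in> tuples W m" for x u using supp[of x u] tm by blast
  have setW: "\<And>x u. f x u \<noteq> 0 \<Longrightarrow> set u \<subseteq> W" using supp' unfolding tuples_def by blast
  have suppK: "Kc s0 (f x) u \<noteq> 0 \<Longrightarrow> u \<in> tuples W (Suc m)" for x u
  proof -
    assume a: "Kc s0 (f x) u \<noteq> 0"
    have "\<And>v. f x v \<noteq> 0 \<Longrightarrow> v \<in> tuples W m" by (rule supp')
    then show ?thesis using W(3) a by (rule Kc_supp)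
  qed
  have setK: "\<And>x u. Kc s0 (f x) u \<noteq> 0 \<Longrightarrow> set u \<subseteq> W" using suppK unfolding tuples_def by blast
  have L: "(\<lambda>x. Kc s0 (f x)) \<in> Lfs M S (Suc m)"
  proof (rule Lfs_intro[where W=W and C=C])
    show "(\<lambda>x. Kc s0 (f x) u) \<in> M \<rightarrow>\<^sub>M count_space UNIV" for u
      by (rule Kc_meas[OF meas])
    show "AE x in M. \<forall>u. \<bar>Kc s0 (f x) u\<bar> \<le> C"
      using C
    proof (rule eventually_mono)
      fix x assume a: "\<forall>u. \<bar>f x u\<bar> \<le> C"
      show "\<forall>u. \<bar>Kc s0 (f x) u\<bar> \<le> C"
      proof
        fix u show "\<bar>Kc s0 (f x) u\<bar> \<le> C" by (rule Kc_bound[OF a C0])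
      qed
    qed
    show "Kc s0 (f x) u \<noteq> 0 \<Longrightarrow> u \<in> tuples W (Suc m)" for x u by (rule suppK)
  qed (use W in auto)
  have F: "bd S (Suc m) (\<lambda>x. Kc s0 (f x)) x (v # w)
        = f x (v # w) - (if v = s0 then DW W m (f x) w else 0)" for x v w
  proof -
    have "bd S (Suc m) (\<lambda>x. Kc s0 (f x)) x (v # w) = DW W (Suc m) (Kc s0 (f x)) (v # w)"
      by (rule bd_DW[OF W(1,2) setK[of x]])
    also have "\<dots> = f x (v # w) - (if v = s0 then DW W m (f x) w else 0)"
      by (rule DW_Kc[OF W(3,1)])
    finally show ?thesis .
  qed
  show ?thesis by (rule that[OF W(1,2) setW L F])
qed

lemma kernel_part:
  assumes "countable S" "f \<in> Lfs M S m" "g \<in> Lfs M S (Suc m)"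
    "\<forall>u\<in>tuples S m. AE x in M. bd S (Suc m) g x u = f x u"
  obtains W where "finite W" "W \<subseteq> S" "\<And>x u. f x u \<noteq> 0 \<Longrightarrow> set u \<subseteq> W"
    "AE x in M. \<forall>s. length s = m \<longrightarrow> set s \<subseteq> S \<longrightarrow> DW W m (f x) s = 0"
proof -
  obtain W1 C1 where W1: "finite W1" "W1 \<subseteq> S" and supp1: "\<And>x u. f x u \<noteq> 0 \<Longrightarrow> u \<in> tuples W1 m"
    and "AE x in M. \<forall>u. \<bar>f x u\<bar> \<le> C1" and "0 \<le> C1"
    and "\<And>u. (\<lambda>x. f x u) \<in> M \<rightarrow>\<^sub>M count_space UNIV"
    using Lfs_elim[OF assms(2,1)] by blast
  obtain W2 C2 where W2: "finite W2" "W2 \<subseteq> S" and supp2: "\<And>x u. g x u \<noteq> 0 \<Longrightarrow> u \<in> tuples W2 (Suc m)"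
    and "AE x in M. \<forall>u. \<bar>g x u\<bar> \<le> C2" and "0 \<le> C2"
    and "\<And>u. (\<lambda>x. g x u) \<in> M \<rightarrow>\<^sub>M count_space UNIV"
    using Lfs_elim[OF assms(3,1)] by blast
  define W where "W = W1 \<union> W2"
  have W: "finite W" "W \<subseteq> S" using W1 W2 unfolding W_def by auto
  have setf: "\<And>x u. f x u \<noteq> 0 \<Longrightarrow> set u \<subseteq> W" using supp1 unfolding tuples_def W_def by blast
  have setg: "\<And>x u. g x u \<noteq> 0 \<Longrightarrow> set u \<subseteq> W" using supp2 unfolding tuples_def W_def by blast
  have AE1: "AE x in M. \<forall>u\<in>tuples S m. bd S (Suc m) g x u = f x u"
    using assms(4) by (subst AE_ball_countable[OF countable_tuples[OF assms(1)]])
  have "AE x in M. \<forall>s. length s = m \<longrightarrow> set s \<subseteq> S \<longrightarrow> DW W m (f x) s = 0"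
    using AE1
  proof (rule eventually_mono)
    fix x assume H: "\<forall>u\<in>tuples S m. bd S (Suc m) g x u = f x u"
    show "\<forall>s. length s = m \<longrightarrow> set s \<subseteq> S \<longrightarrow> DW W m (f x) s = 0"
    proof (intro allI impI)
      fix s :: "'a list" assume ls: "length s = m" and ss: "set s \<subseteq> S"
      have "DW W m (f x) s = DW W m (DW W (Suc m) (g x)) s"
      proof (rule DW_cong)
        fix j t assume "j \<le> m" "t \<in> W"
        then have "ins_at j t s \<in> tuples S m" using ls ss W(2) unfolding tuples_def by auto
        then have "f x (ins_at j t s) = bd S (Suc m) g x (ins_at j t s)" using H by simp
        also have "\<dots> = DW W (Suc m) (g x) (ins_at j t s)"
          by (rule bd_DW[OF W setg[of x]])
        finally show "f x (ins_at j t s) = DW W (Suc m) (g x) (ins_at j t s)" .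
      qed
      also have "\<dots> = 0" by (rule DW_DW[OF W(1) ls])
      finally show "DW W m (f x) s = 0" .
    qed
  qed
  note A = this
  show ?thesis by (rule that[OF W setf A])
qed

theorem corollary4p2:
  fixes G :: "('g, 'b) monoid_scheme"
    and S :: "'s set" and b :: "'g \<Rightarrow> 's \<Rightarrow> 's"
    and M :: "'x measure" and a :: "'g \<Rightarrow> 'x \<Rightarrow> 'x"
  assumes "group G" and "countable (carrier G)"
    and "free_G_set G S b" and "countable S" and "S \<noteq> {}"
    and "standard_G_space G M a"
  shows
    \<comment> \<open>the maps are well defined and Z Gamma-linear\<close>
    "(\<forall>n. \<forall>f\<in>Lfs M S (Suc n). bd S (Suc n) f \<in> Lfs M S n)
     \<and> (\<forall>f\<in>Lfs M S 0. aug S f \<in> Linf M)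
     \<and> (\<forall>n. \<forall>g\<in>carrier G. \<forall>f\<in>Lfs M S (Suc n). \<forall>s\<in>tuples S n.
          AE x in M. bd S (Suc n) (gact_fs G a b g f) x s = gact_fs G a b g (bd S (Suc n) f) x s)
     \<and> (\<forall>g\<in>carrier G. \<forall>f\<in>Lfs M S 0.
          AE x in M. aug S (gact_fs G a b g f) x = gact G a g (aug S f) x)
     \<comment> \<open>exactness at L^infty(X;Z): the augmentation is surjective\<close>
     \<and> (\<forall>h\<in>Linf M. \<exists>f\<in>Lfs M S 0. AE x in M. aug S f x = h x)
     \<comment> \<open>exactness in degree 0: ker aug = im bd_1\<close>
     \<and> (\<forall>f\<in>Lfs M S 0. (AE x in M. aug S f x = 0) \<longleftrightarrow>
          (\<exists>g\<in>Lfs M S 1. \<forall>s\<in>tuples S 0. AE x in M. bd S 1 g x s = f x s))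
     \<comment> \<open>exactness in degree n \<ge> 1: ker bd_n = im bd_(n+1)\<close>
     \<and> (\<forall>n. \<forall>f\<in>Lfs M S (Suc n).
          (\<forall>s\<in>tuples S n. AE x in M. bd S (Suc n) f x s = 0) \<longleftrightarrow>
          (\<exists>g\<in>Lfs M S (Suc (Suc n)). \<forall>s\<in>tuples S (Suc n).
              AE x in M. bd S (Suc (Suc n)) g x s = f x s))"
proof -
  have ga: "group_action G S b" using assms(3) unfolding free_G_set_def by blast
  have cS: "countable S" by (rule assms(4))
  obtain s0 where s0: "s0 \<in> S" using assms(5) by blast
  have c1: "\<forall>n. \<forall>f\<in>Lfs M S (Suc n). bd S (Suc n) f \<in> Lfs M S n"
    using part1[OF cS] by blast
  have c2: "\<forall>f\<in>Lfs M S 0. aug S f \<in> Linf M"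
    using part2[OF cS] by blast
  have c3: "\<forall>n. \<forall>g\<in>carrier G. \<forall>f\<in>Lfs M S (Suc n). \<forall>s\<in>tuples S n.
          AE x in M. bd S (Suc n) (gact_fs G a b g f) x s = gact_fs G a b g (bd S (Suc n) f) x s"
  proof (intro allI ballI)
    fix n g f s assume "g \<in> carrier G"
    then show "AE x in M. bd S (Suc n) (gact_fs G a b g f) x s = gact_fs G a b g (bd S (Suc n) f) x s"
      by (intro AE_I2) (rule part3[OF assms(1) ga])
  qed
  have c4: "\<forall>g\<in>carrier G. \<forall>f\<in>Lfs M S 0.
          AE x in M. aug S (gact_fs G a b g f) x = gact G a g (aug S f) x"
  proof (intro allI ballI)
    fix g f assume "g \<in> carrier G"
    then show "AE x in M. aug S (gact_fs G a b g f) x = gact G a g (aug S f) x"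
      by (intro AE_I2) (rule part4[OF assms(1) ga])
  qed
  have c5: "\<forall>h\<in>Linf M. \<exists>f\<in>Lfs M S 0. AE x in M. aug S f x = h x"
    using part5[OF s0] by blast
  have c6: "\<forall>f\<in>Lfs M S 0. (AE x in M. aug S f x = 0) \<longleftrightarrow>
          (\<exists>g\<in>Lfs M S 1. \<forall>s\<in>tuples S 0. AE x in M. bd S 1 g x s = f x s)"
  proof
    fix f assume fL: "f \<in> Lfs M S 0"
    show "(AE x in M. aug S f x = 0) \<longleftrightarrow>
          (\<exists>g\<in>Lfs M S 1. \<forall>s\<in>tuples S 0. AE x in M. bd S 1 g x s = f x s)"
    proof
      assume H: "AE x in M. aug S f x = 0"
      obtain W where W: "finite W" "W \<subseteq> S" and setW: "\<And>x u. f x u \<noteq> 0 \<Longrightarrow> set u \<subseteq> W"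
        and L: "(\<lambda>x. Kc s0 (f x)) \<in> Lfs M S (Suc 0)"
        and F: "\<And>x v w. bd S (Suc 0) (\<lambda>x. Kc s0 (f x)) x (v # w)
                = f x (v # w) - (if v = s0 then DW W 0 (f x) w else 0)"
        using Kc_part[OF cS s0 fL] by blast
      have "\<forall>s\<in>tuples S 0. AE x in M. bd S 1 (\<lambda>x. Kc s0 (f x)) x s = f x s"
      proof
        fix s assume "s \<in> tuples S 0"
        then obtain v where s: "s = [v]" unfolding tuples_def by (cases s) auto
        show "AE x in M. bd S 1 (\<lambda>x. Kc s0 (f x)) x s = f x s"
          using H
        proof (rule eventually_mono)
          fix x assume a: "aug S f x = 0"
          have "aug S f x = DW W 0 (f x) []" by (rule aug_DW[OF W setW[of x]])
          then show "bd S 1 (\<lambda>x. Kc s0 (f x)) x s = f x s"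
            using F[of x v "[]"] a s by simp
        qed
      qed
      then show "\<exists>g\<in>Lfs M S 1. \<forall>s\<in>tuples S 0. AE x in M. bd S 1 g x s = f x s"
        using L by (intro bexI[of _ "\<lambda>x. Kc s0 (f x)"]) simp_all
    next
      assume "\<exists>g\<in>Lfs M S 1. \<forall>s\<in>tuples S 0. AE x in M. bd S 1 g x s = f x s"
      then obtain g where gL: "g \<in> Lfs M S (Suc 0)"
        and gH: "\<forall>s\<in>tuples S 0. AE x in M. bd S (Suc 0) g x s = f x s" by auto
      obtain W where W: "finite W" "W \<subseteq> S" and setW: "\<And>x u. f x u \<noteq> 0 \<Longrightarrow> set u \<subseteq> W"
        and A: "AE x in M. \<forall>s. length s = 0 \<longrightarrow> set s \<subseteq> S \<longrightarrow> DW W 0 (f x) s = 0"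
        using kernel_part[OF cS fL gL gH] by blast
      show "AE x in M. aug S f x = 0"
        using A
      proof (rule eventually_mono)
        fix x assume a: "\<forall>s. length s = 0 \<longrightarrow> set s \<subseteq> S \<longrightarrow> DW W 0 (f x) s = 0"
        have "aug S f x = DW W 0 (f x) []" by (rule aug_DW[OF W setW[of x]])
        then show "aug S f x = 0" using a by simp
      qed
    qed
  qed
  have c7: "\<forall>n. \<forall>f\<in>Lfs M S (Suc n).
          (\<forall>s\<in>tuples S n. AE x in M. bd S (Suc n) f x s = 0) \<longleftrightarrow>
          (\<exists>g\<in>Lfs M S (Suc (Suc n)). \<forall>s\<in>tuples S (Suc n).
              AE x in M. bd S (Suc (Suc n)) g x s = f x s)"
  proof (intro allI ballI)
    fix n f assume fL: "f \<in> Lfs M S (Suc n)"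
    show "(\<forall>s\<in>tuples S n. AE x in M. bd S (Suc n) f x s = 0) \<longleftrightarrow>
          (\<exists>g\<in>Lfs M S (Suc (Suc n)). \<forall>s\<in>tuples S (Suc n).
              AE x in M. bd S (Suc (Suc n)) g x s = f x s)"
    proof
      assume H: "\<forall>s\<in>tuples S n. AE x in M. bd S (Suc n) f x s = 0"
      obtain W where W: "finite W" "W \<subseteq> S" and setW: "\<And>x u. f x u \<noteq> 0 \<Longrightarrow> set u \<subseteq> W"
        and L: "(\<lambda>x. Kc s0 (f x)) \<in> Lfs M S (Suc (Suc n))"
        and F: "\<And>x v w. bd S (Suc (Suc n)) (\<lambda>x. Kc s0 (f x)) x (v # w)
                = f x (v # w) - (if v = s0 then DW W (Suc n) (f x) w else 0)"
        using Kc_part[OF cS s0 fL] by blast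
      have "\<forall>s\<in>tuples S (Suc n). AE x in M. bd S (Suc (Suc n)) (\<lambda>x. Kc s0 (f x)) x s = f x s"
      proof
        fix s assume st: "s \<in> tuples S (Suc n)"
        then obtain v w where s: "s = v # w" unfolding tuples_def by (cases s) auto
        have "w \<in> tuples S n" using st s unfolding tuples_def by auto
        then have Hw: "AE x in M. bd S (Suc n) f x w = 0" using H by blast
        show "AE x in M. bd S (Suc (Suc n)) (\<lambda>x. Kc s0 (f x)) x s = f x s"
          using Hw
        proof (rule eventually_mono)
          fix x assume a: "bd S (Suc n) f x w = 0"
          have "bd S (Suc n) f x w = DW W (Suc n) (f x) w" by (rule bd_DW[OF W setW[of x]])
          then show "bd S (Suc (Suc n)) (\<lambda>x. Kc s0 (f x)) x s = f x s"
            using F[of x v w] a s by simp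
        qed
      qed
      then show "\<exists>g\<in>Lfs M S (Suc (Suc n)). \<forall>s\<in>tuples S (Suc n).
              AE x in M. bd S (Suc (Suc n)) g x s = f x s"
        using L by (intro bexI[of _ "\<lambda>x. Kc s0 (f x)"]) simp_all
    next
      assume "\<exists>g\<in>Lfs M S (Suc (Suc n)). \<forall>s\<in>tuples S (Suc n).
              AE x in M. bd S (Suc (Suc n)) g x s = f x s"
      then obtain g where gL: "g \<in> Lfs M S (Suc (Suc n))"
        and gH: "\<forall>s\<in>tuples S (Suc n). AE x in M. bd S (Suc (Suc n)) g x s = f x s" by auto
      obtain W where W: "finite W" "W \<subseteq> S" and setW: "\<And>x u. f x u \<noteq> 0 \<Longrightarrow> set u \<subseteq> W"
        and A: "AE x in M. \<forall>s. length s = Suc n \<longrightarrow> set s \<subseteq> S \<longrightarrow> DW W (Suc n) (f x) s = 0"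
        using kernel_part[OF cS fL gL gH] by blast
      show "\<forall>s\<in>tuples S n. AE x in M. bd S (Suc n) f x s = 0"
      proof
        fix s assume st: "s \<in> tuples S n"
        show "AE x in M. bd S (Suc n) f x s = 0"
          using A
        proof (rule eventually_mono)
          fix x assume a: "\<forall>s. length s = Suc n \<longrightarrow> set s \<subseteq> S \<longrightarrow> DW W (Suc n) (f x) s = 0"
          have "bd S (Suc n) f x s = DW W (Suc n) (f x) s" by (rule bd_DW[OF W setW[of x]])
          then show "bd S (Suc n) f x s = 0" using a st unfolding tuples_def by simp
        qed
      qed
    qed
  qed
  show ?thesis using c1 c2 c3 c4 c5 c6 c7 by blast
qed

end
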